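(* Let $(S_j)_{j\ge1}$ be a $\boldsymbol\mu$-geometrically Cauchy sequence in $\mathbb T$. Then there is $S\in\mathbb T$ such that $S_j$ converges $\boldsymbol\mu$-geometrically to $S$.
   Context: $\mathbb T$ is the field of real grid-based transseries over the ordered group $\mathfrak G$ of transmonomials; $\operatorname{mag}T$ is the dominant monomial of $T\ne0$. A ratio set is a finite $\boldsymbol\mu\subset\{\mathfrak g\prec1\}$; $\boldsymbol\mu^*$ (resp. $\boldsymbol\mu^+$) is the set of products of zero or more (resp. one or more) elements of $\boldsymbol\mu$. Monomials: $\mathfrak m\prec^{\boldsymbol\mu}\mathfrak n$ iff $\mathfrak m/\mathfrak n\in\boldsymbol\mu^+$; transseries: $A\prec^{\boldsymbol\mu}B$ (written also $B\succ^{\boldsymbol\mu}A$) iff each $\mathfrak a\in\operatorname{supp}A$ is $\prec^{\boldsymbol\mu}$ some $\mathfrak b\in\operatorname{supp}B$. $\boldsymbol\mu$ witnesses nonzero $T$ iff $\operatorname{supp}T\subseteq(\operatorname{mag}T)\boldsymbol\mu^*$. A sequence $(S_j)$ is $\boldsymbol\mu$-geometrically Cauchy if for all $j$, $\boldsymbol\mu$ witnesses $S_{j+1}-S_j$ and (for $j\ge2$) $S_j-S_{j-1}\succ^{\boldsymbol\mu}S_{j+1}-S_j$; equivalently the series $\sum_{j\ge1}(S_{j+1}-S_j)$ is $\boldsymbol\mu$-geometrically convergent, where $\sum A_j$ is $\boldsymbol\mu$-geometrically convergent if $\boldsymbol\mu$ witnesses each $A_j$ and $A_j\succ^{\boldsymbol\mu}A_{j+1}$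 for all $j$. $S_j$ converges $\boldsymbol\mu$-geometrically to $S$ if for all $j$, $\boldsymbol\mu$ witnesses $S-S_j$ and $S-S_j\succ^{\boldsymbol\mu}S-S_{j+1}$. *)

theory Defs
  imports Complex_Main "HOL-Library.Function_Algebras"
begin

text \<open>Monomials form a linearly ordered abelian group, written additively:
  the product of monomials is +, the unit monomial is 0, and "m is infinitesimal"
  (m \<prec> 1) is m < 0.  A (grid-based) transseries is a real coefficient function
  on monomials with grid-based support.\<close>

definition supp :: "('g \<Rightarrow> real) \<Rightarrow> 'g set" where
  "supp T = {m. T m \<noteq> 0}"

definition ratio_set :: "'g::linordered_ab_group_add set \<Rightarrow> bool" where
  "ratio_set \<mu> \<longleftrightarrow> finite \<mu> \<and> (\<forall>e\<in>\<mu>. e < 0)"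

definition rstar :: "'g::linordered_ab_group_add set \<Rightarrow> 'g set" where
  "rstar \<mu> = {sum_list xs | xs. set xs \<subseteq> \<mu>}"

definition rplus :: "'g::linordered_ab_group_add set \<Rightarrow> 'g set" where
  "rplus \<mu> = {sum_list xs | xs. set xs \<subseteq> \<mu> \<and> xs \<noteq> []}"

definition grid_based :: "('g::linordered_ab_group_add \<Rightarrow> real) \<Rightarrow> bool" where
  "grid_based T \<longleftrightarrow> (\<exists>m \<mu>. ratio_set \<mu> \<and> supp T \<subseteq> {m + w | w. w \<in> rstar \<mu>})"

definition mag :: "('g::linordered_ab_group_add \<Rightarrow> real) \<Rightarrow> 'g" where
  "mag T = (THE m. m \<in> supp T \<and> (\<forall>n\<in>supp T. n \<le> m))"

definition mono_prec :: "'g::linordered_ab_group_add set \<Rightarrow> 'g \<Rightarrow> 'g \<Rightarrow> bool" where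
  "mono_prec \<mu> m n \<longleftrightarrow> m - n \<in> rplus \<mu>"

definition ts_prec :: "'g::linordered_ab_group_add set \<Rightarrow> ('g \<Rightarrow> real) \<Rightarrow> ('g \<Rightarrow> real) \<Rightarrow> bool" where
  "ts_prec \<mu> A B \<longleftrightarrow> (\<forall>a\<in>supp A. \<exists>b\<in>supp B. mono_prec \<mu> a b)"

definition witnesses :: "'g::linordered_ab_group_add set \<Rightarrow> ('g \<Rightarrow> real) \<Rightarrow> bool" where
  "witnesses \<mu> T \<longleftrightarrow> T \<noteq> 0 \<and> supp T \<subseteq> {mag T + w | w. w \<in> rstar \<mu>}"

definition geom_cauchy :: "'g::linordered_ab_group_add set \<Rightarrow> (nat \<Rightarrow> 'g \<Rightarrow> real) \<Rightarrow> bool" where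
  "geom_cauchy \<mu> S \<longleftrightarrow>
     (\<forall>j\<ge>1. witnesses \<mu> (S (Suc j) - S j)) \<and>
     (\<forall>j\<ge>2. ts_prec \<mu> (S (Suc j) - S j) (S j - S (j - 1)))"

definition geom_converges :: "'g::linordered_ab_group_add set \<Rightarrow> (nat \<Rightarrow> 'g \<Rightarrow> real) \<Rightarrow> ('g \<Rightarrow> real) \<Rightarrow> bool" where
  "geom_converges \<mu> S L \<longleftrightarrow>
     (\<forall>j\<ge>1. witnesses \<mu> (L - S j) \<and> ts_prec \<mu> (L - S (Suc j)) (L - S j))"

end

theory Submission
  imports Defs "HOL-Library.Multiset"
begin

lemma nat_incseq_sub:
  fixes h :: "nat \<Rightarrow> nat"
  shows "\<exists>s. strict_mono s \<and> (\<forall>n. h (s n) \<le> h (s (Suc n)))"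
proof -
  obtain s where s: "strict_mono s" "monoseq (\<lambda>n. h (s n))" using seq_monosub by blast
  show ?thesis
  proof (cases "\<forall>m. \<forall>n\<ge>m. h (s m) \<le> h (s n)")
    case True
    then have "\<forall>n. h (s n) \<le> h (s (Suc n))" by simp
    then show ?thesis using s(1) by (intro exI[of _ s] conjI)
  next
    case False
    then have dec: "\<forall>m. \<forall>n\<ge>m. h (s n) \<le> h (s m)" using s(2) unfolding monoseq_def by blast
    obtain n0 where n0: "\<forall>y. h (s n0) \<le> h (s y)"
      using ex_has_least_nat[of "\<lambda>_. True" 0 "\<lambda>n. h (s n)"] by auto
    have eq: "h (s n) = h (s n0)" if "n \<ge> n0" for n
    proof -
      have "h (s n) \<le> h (s n0)" using dec that by simp
      moreover have "h (s n0) \<le> h (s n)" using n0 by simp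
      ultimately show ?thesis by linarith
    qed
    have "strict_mono (\<lambda>n. s (n + n0))" using s(1) unfolding strict_mono_def by simp
    moreover have "\<forall>n. h (s (n + n0)) \<le> h (s (Suc n + n0))"
    proof
      fix n
      have "h (s (n + n0)) = h (s n0)" by (rule eq) simp
      moreover have "h (s (Suc n + n0)) = h (s n0)" by (rule eq) simp
      ultimately show "h (s (n + n0)) \<le> h (s (Suc n + n0))" by simp
    qed
    ultimately show ?thesis by (intro exI[of _ "\<lambda>n. s (n + n0)"] conjI)
  qed
qed
lemma chain_mono_mset:
  assumes "\<forall>n. g (r n) \<subseteq># (g (r (Suc n)) :: 'a multiset)" "i \<le> k"
  shows "g (r i) \<subseteq># g (r k)"
  using assms(2)
proof (induction k rule: dec_induct)
  case base then show ?case by simp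
next
  case (step k) then show ?case using assms(1) subset_mset.order_trans by blast
qed

lemma dickson:
  fixes f :: "nat \<Rightarrow> 'a multiset"
  assumes "finite \<mu>"
  shows "(\<forall>n. set_mset (f n) \<subseteq> \<mu>) \<Longrightarrow> \<exists>r. strict_mono r \<and> (\<forall>n. f (r n) \<subseteq># f (r (Suc n)))"
  using assms
proof (induction \<mu> arbitrary: f rule: finite_induct)
  case empty
  then have "f n = {#}" for n by auto
  then have "\<forall>n. f (id n) \<subseteq># f (id (Suc n :: nat))" by simp
  moreover have "strict_mono (id :: nat \<Rightarrow> nat)" by (simp add: strict_mono_def)
  ultimately show ?case by blast
next
  case (insert a F)
  define g where "g n = filter_mset (\<lambda>x. x \<noteq> a) (f n)" for n
  have "\<forall>n. set_mset (g n) \<subseteq> F" using insert.prems unfolding g_def by auto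
  then obtain r where r: "strict_mono r" "\<forall>n. g (r n) \<subseteq># g (r (Suc n))"
    using insert.IH by blast
  obtain s where s: "strict_mono s" "\<forall>n. count (f (r (s n))) a \<le> count (f (r (s (Suc n)))) a"
    using nat_incseq_sub[of "\<lambda>n. count (f (r n)) a"] by blast
  have gs: "g (r (s n)) \<subseteq># g (r (s (Suc n)))" for n
    using chain_mono_mset[of g r, OF r(2)] s(1) by (simp add: strict_mono_less_eq)
  have "f (r (s n)) \<subseteq># f (r (s (Suc n)))" for n
    unfolding subseteq_mset_def
  proof
    fix x
    show "count (f (r (s n))) x \<le> count (f (r (s (Suc n)))) x"
    proof (cases "x = a")
      case True then show ?thesis using s(2) by simp
    next
      case False
      have "count (g (r (s n))) x \<le> count (g (r (s (Suc n)))) x"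
        using gs[of n] unfolding subseteq_mset_def by blast
      then show ?thesis using False unfolding g_def by simp
    qed
  qed
  moreover have "strict_mono (r \<circ> s)" using r(1) s(1) by (simp add: strict_mono_def)
  ultimately show ?case by (intro exI[of _ "r \<circ> s"] conjI) (simp_all add: comp_def)
qed

lemma good_pair:
  fixes M :: "nat \<Rightarrow> 'a multiset"
  assumes "finite \<mu>" "\<forall>n. set_mset (M n) \<subseteq> \<mu>"
  shows "\<exists>i j. i < j \<and> M i \<subseteq># M j"
proof -
  obtain r where r: "strict_mono r" "\<forall>n. M (r n) \<subseteq># M (r (Suc n))"
    using dickson[OF assms(1), of M] assms(2) by blast
  have "r 0 < r (Suc 0)" using r(1) by (simp add: strict_mono_def)
  then show ?thesis using r(2) by blast
qed

lemma rstar_iff: "w \<in> rstar \<mu> \<longleftrightarrow> (\<exists>M. set_mset M \<subseteq> \<mu> \<and> w = sum_mset M)"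
proof
  assume "w \<in> rstar \<mu>"
  then obtain xs where "set xs \<subseteq> \<mu>" "w = sum_list xs" unfolding rstar_def by blast
  then show "\<exists>M. set_mset M \<subseteq> \<mu> \<and> w = sum_mset M"
    by (intro exI[of _ "mset xs"]) (simp add: sum_mset_sum_list)
next
  assume "\<exists>M. set_mset M \<subseteq> \<mu> \<and> w = sum_mset M"
  then obtain M where M: "set_mset M \<subseteq> \<mu>" "w = sum_mset M" by blast
  obtain xs where "mset xs = M" using ex_mset by blast
  with M show "w \<in> rstar \<mu>" unfolding rstar_def
    by (metis (mono_tags, lifting) mem_Collect_eq set_mset_mset sum_mset_sum_list)
qed

lemma rplus_iff: "w \<in> rplus \<mu> \<longleftrightarrow> (\<exists>M. set_mset M \<subseteq> \<mu> \<and> M \<noteq> {#} \<and> w = sum_mset M)"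
proof
  assume "w \<in> rplus \<mu>"
  then obtain xs where "set xs \<subseteq> \<mu>" "xs \<noteq> []" "w = sum_list xs" unfolding rplus_def by blast
  then show "\<exists>M. set_mset M \<subseteq> \<mu> \<and> M \<noteq> {#} \<and> w = sum_mset M"
    by (intro exI[of _ "mset xs"]) (simp add: sum_mset_sum_list)
next
  assume "\<exists>M. set_mset M \<subseteq> \<mu> \<and> M \<noteq> {#} \<and> w = sum_mset M"
  then obtain M where M: "set_mset M \<subseteq> \<mu>" "M \<noteq> {#}" "w = sum_mset M" by blast
  obtain xs where xs: "mset xs = M" using ex_mset by blast
  then have "xs \<noteq> []" using M(2) by auto
  with M xs show "w \<in> rplus \<mu>" unfolding rplus_def
    by (metis (mono_tags, lifting) mem_Collect_eq set_mset_mset sum_mset_sum_list)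
qed

lemma sum_mset_nonpos:
  fixes M :: "'g::linordered_ab_group_add multiset"
  assumes "\<forall>e\<in>\<mu>. e < 0" "set_mset M \<subseteq> \<mu>"
  shows "sum_mset M \<le> 0"
  using assms(2)
proof (induction M)
  case empty then show ?case by simp
next
  case (add x M)
  then have "x < 0" "sum_mset M \<le> 0" using assms(1) by auto
  then show ?case by (simp add: add_nonpos_nonpos)
qed

lemma sum_mset_neg:
  fixes M :: "'g::linordered_ab_group_add multiset"
  assumes "\<forall>e\<in>\<mu>. e < 0" "set_mset M \<subseteq> \<mu>" "M \<noteq> {#}"
  shows "sum_mset M < 0"
proof -
  obtain x N where M: "M = add_mset x N" using assms(3) multiset_cases by blast
  then have "x < 0" "sum_mset N \<le> 0" using assms(1,2) sum_mset_nonpos[OF assms(1), of N] by auto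
  then show ?thesis using M by (simp add: add_neg_nonpos)
qed

lemma sum_mset_sub:
  fixes M N :: "'g::linordered_ab_group_add multiset"
  assumes "M \<subseteq># N"
  shows "sum_mset N = sum_mset M + sum_mset (N - M)"
proof -
  have "N = M + (N - M)" using assms by (simp add: subset_mset.add_diff_inverse)
  then show ?thesis by (metis sum_mset.union)
qed

lemma max_exists:
  fixes A :: "'g::linordered_ab_group_add set"
  assumes rs: "ratio_set \<mu>" and ne: "A \<noteq> {}" and sub: "A \<subseteq> {c + w | w. w \<in> rstar \<mu>}"
  shows "\<exists>m\<in>A. \<forall>n\<in>A. n \<le> m"
proof (rule ccontr)
  assume "\<not> ?thesis"
  then have H: "\<forall>m\<in>A. \<exists>n\<in>A. m < n" by (meson not_le)
  obtain a0 where a0: "a0 \<in> A" using ne by blast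
  define a where "a = rec_nat a0 (\<lambda>_ x. SOME y. y \<in> A \<and> x < y)"
  have step: "a (Suc n) \<in> A \<and> a n < a (Suc n)" if "a n \<in> A" for n
  proof -
    have "\<exists>y. y \<in> A \<and> a n < y" using H that by blast
    then have "(SOME y. y \<in> A \<and> a n < y) \<in> A \<and> a n < (SOME y. y \<in> A \<and> a n < y)" by (rule someI_ex)
    then show ?thesis unfolding a_def by simp
  qed
  have inA: "a n \<in> A" for n
  proof (induction n)
    case 0 show ?case using a0 by (simp add: a_def)
  next
    case (Suc n) then show ?case using step by blast
  qed
  have aA: "a n \<in> A \<and> a n < a (Suc n)" for n using step inA by blast
  have "\<forall>n. \<exists>M. set_mset M \<subseteq> \<mu> \<and> a n = c + sum_mset M"
  proof
    fix n
    have "a n \<in> {c + w | w. w \<in> rstar \<mu>}" using inA sub by blast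
    then obtain w where w: "a n = c + w" "w \<in> rstar \<mu>" by blast
    then obtain M where "set_mset M \<subseteq> \<mu>" "w = sum_mset M" unfolding rstar_iff by blast
    then show "\<exists>M. set_mset M \<subseteq> \<mu> \<and> a n = c + sum_mset M" using w(1) by blast
  qed
  then obtain Mf where Mf: "\<forall>n. set_mset (Mf n) \<subseteq> \<mu> \<and> a n = c + sum_mset (Mf n)"
    by metis
  have fin: "finite \<mu>" and neg: "\<forall>e\<in>\<mu>. e < 0" using rs unfolding ratio_set_def by auto
  obtain i j where ij: "i < j" "Mf i \<subseteq># Mf j" using good_pair[OF fin, of Mf] Mf by blast
  have "sum_mset (Mf j) = sum_mset (Mf i) + sum_mset (Mf j - Mf i)" using sum_mset_sub[OF ij(2)] .
  moreover have "set_mset (Mf j - Mf i) \<subseteq> \<mu>" using Mf by (meson in_diffD subset_iff)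
  ultimately have "sum_mset (Mf j) \<le> sum_mset (Mf i)" using sum_mset_nonpos[OF neg] by force
  then have "a j \<le> a i" using Mf by simp
  moreover have "a i < a j" using lift_Suc_mono_less[of a, OF _ ij(1)] aA by blast
  ultimately show False by simp
qed

lemma bounded_size:
  fixes x :: "'g::linordered_ab_group_add"
  assumes rs: "ratio_set \<mu>"
  shows "\<exists>N. \<forall>M. set_mset M \<subseteq> \<mu> \<and> sum_mset M = x \<longrightarrow> size M \<le> N"
proof (rule ccontr)
  define P where "P M \<longleftrightarrow> set_mset M \<subseteq> \<mu> \<and> sum_mset M = x" for M
  assume "\<not> ?thesis"
  then have H: "\<forall>N. \<exists>M. P M \<and> N < size M" unfolding P_def by (meson not_le)
  obtain M0 where M0: "P M0" using H by blast
  define Ms where "Ms = rec_nat M0 (\<lambda>_ X. SOME Y. P Y \<and> size X < size Y)"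
  have step: "P (Ms (Suc n)) \<and> size (Ms n) < size (Ms (Suc n))" if "P (Ms n)" for n
  proof -
    have "\<exists>Y. P Y \<and> size (Ms n) < size Y" using H by blast
    then have "P (SOME Y. P Y \<and> size (Ms n) < size Y) \<and> size (Ms n) < size (SOME Y. P Y \<and> size (Ms n) < size Y)" by (rule someI_ex)
    then show ?thesis unfolding Ms_def by simp
  qed
  have inP: "P (Ms n)" for n
  proof (induction n)
    case 0 show ?case using M0 by (simp add: Ms_def)
  next
    case (Suc n) then show ?case using step by blast
  qed
  have MsP: "P (Ms n) \<and> size (Ms n) < size (Ms (Suc n))" for n using step inP by blast
  have fin: "finite \<mu>" and neg: "\<forall>e\<in>\<mu>. e < 0" using rs unfolding ratio_set_def by auto
  obtain i j where ij: "i < j" "Ms i \<subseteq># Ms j" using good_pair[OF fin, of Ms] MsP unfolding P_def by blast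
  have "size (Ms i) < size (Ms j)" using lift_Suc_mono_less[of "\<lambda>n. size (Ms n)", OF _ ij(1)] MsP by blast
  then have ne: "Ms j - Ms i \<noteq> {#}" using ij(2)
    using size_Diff_submset[OF ij(2)] by auto
  have "sum_mset (Ms j) = sum_mset (Ms i) + sum_mset (Ms j - Ms i)" using sum_mset_sub[OF ij(2)] .
  moreover have "set_mset (Ms j - Ms i) \<subseteq> \<mu>" using MsP unfolding P_def by (meson in_diffD subset_iff)
  ultimately have "sum_mset (Ms j) < sum_mset (Ms i)" using sum_mset_neg[OF neg _ ne] by force
  then show False using MsP unfolding P_def by simp
qed


lemma mag_eq:
  assumes "m \<in> supp T" "\<forall>n\<in>supp T. n \<le> m"
  shows "mag T = (m::'g::linordered_ab_group_add)"
  unfolding mag_def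
proof (rule the_equality)
  show "m \<in> supp T \<and> (\<forall>n\<in>supp T. n \<le> m)" using assms by blast
next
  fix m' assume "m' \<in> supp T \<and> (\<forall>n\<in>supp T. n \<le> m')"
  then show "m' = m" using assms by (meson order_antisym)
qed

lemma mag_props:
  fixes T :: "'g::linordered_ab_group_add \<Rightarrow> real"
  assumes rs: "ratio_set \<mu>" and w: "witnesses \<mu> T"
  shows "mag T \<in> supp T \<and> (\<forall>n\<in>supp T. n \<le> mag T)"
proof -
  have T0: "T \<noteq> 0" and sub: "supp T \<subseteq> {mag T + w | w. w \<in> rstar \<mu>}"
    using w unfolding witnesses_def by auto
  have "supp T \<noteq> {}"
  proof
    assume "supp T = {}"
    then have "T = 0" unfolding supp_def by (auto simp: fun_eq_iff)
    then show False using T0 by simp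
  qed
  then obtain m where m: "m \<in> supp T" "\<forall>n\<in>supp T. n \<le> m" using max_exists[OF rs _ sub] by blast
  then have "mag T = m" by (rule mag_eq)
  then show ?thesis using m by simp
qed

lemma grid_union:
  fixes A B :: "'g::linordered_ab_group_add set"
  assumes r1: "ratio_set \<mu>1" and r2: "ratio_set \<mu>2"
    and A: "A \<subseteq> {m1 + w | w. w \<in> rstar \<mu>1}" and B: "B \<subseteq> {m2 + w | w. w \<in> rstar \<mu>2}"
    and le: "m2 \<le> m1"
  shows "\<exists>m \<nu>. ratio_set \<nu> \<and> A \<union> B \<subseteq> {m + w | w. w \<in> rstar \<nu>}"
proof -
  define \<nu> where "\<nu> = \<mu>1 \<union> \<mu>2 \<union> {d. d = m2 - m1 \<and> d < 0}"
  have "finite {d. d = m2 - m1 \<and> d < 0}" by (rule finite_subset[of _ "{m2 - m1}"]) auto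
  then have rn: "ratio_set \<nu>" using r1 r2 unfolding ratio_set_def \<nu>_def by auto
  have "x \<in> {m1 + w | w. w \<in> rstar \<nu>}" if xA: "x \<in> A" for x
  proof -
    obtain w where w: "x = m1 + w" "w \<in> rstar \<mu>1" using A xA by blast
    then obtain M where M: "set_mset M \<subseteq> \<mu>1" "w = sum_mset M" unfolding rstar_iff by blast
    then have "set_mset M \<subseteq> \<nu>" unfolding \<nu>_def by blast
    then have "w \<in> rstar \<nu>" using M(2) unfolding rstar_iff by blast
    then show ?thesis using w(1) by blast
  qed
  moreover have "x \<in> {m1 + w | w. w \<in> rstar \<nu>}" if xB: "x \<in> B" for x
  proof -
    obtain w where w: "x = m2 + w" "w \<in> rstar \<mu>2" using B xB by blast
    then obtain M where M: "set_mset M \<subseteq> \<mu>2" "w = sum_mset M" unfolding rstar_iff by blast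
    show ?thesis
    proof (cases "m2 = m1")
      case True
      have "set_mset M \<subseteq> \<nu>" using M unfolding \<nu>_def by blast
      then have "w \<in> rstar \<nu>" using M(2) unfolding rstar_iff by blast
      then show ?thesis using w(1) True by blast
    next
      case False
      then have "m2 - m1 < 0" using le by simp
      then have "set_mset (add_mset (m2 - m1) M) \<subseteq> \<nu>" using M unfolding \<nu>_def by auto
      then have "sum_mset (add_mset (m2 - m1) M) \<in> rstar \<nu>" unfolding rstar_iff by blast
      moreover have "x = m1 + sum_mset (add_mset (m2 - m1) M)" using w(1) M(2) by (simp add: algebra_simps)
      ultimately show ?thesis by blast
    qed
  qed
  ultimately show ?thesis using rn by blast
qed


theorem proposition3p19:
  fixes \<mu> :: "'g::linordered_ab_group_add set"
    and S :: "nat \<Rightarrow> 'g \<Rightarrow> real"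
  assumes "ratio_set \<mu>"
    and "\<forall>j\<ge>1. grid_based (S j)"
    and "geom_cauchy \<mu> S"
  shows "\<exists>L. grid_based L \<and> geom_converges \<mu> S L"
proof -
  have rs: "ratio_set \<mu>" by fact
  have neg: "\<forall>e\<in>\<mu>. e < 0" using rs unfolding ratio_set_def by auto
  define D where "D j = S (Suc j) - S j" for j
  have wit: "witnesses \<mu> (D j)" if "j \<ge> 1" for j
    using assms(3) that unfolding geom_cauchy_def D_def by blast
  have prec: "ts_prec \<mu> (D j) (D (j - 1))" if "j \<ge> 2" for j
  proof -
    have "Suc (j - 1) = j" using that by simp
    then show ?thesis using assms(3) that unfolding geom_cauchy_def D_def by metis
  qed
  define mg where "mg j = mag (D j)" for j
  have mgp: "mg j \<in> supp (D j) \<and> (\<forall>n\<in>supp (D j). n \<le> mg j)" if "j \<ge> 1" for j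
    using mag_props[OF rs wit[OF that]] unfolding mg_def .
  have mgsub: "supp (D j) \<subseteq> {mg j + w | w. w \<in> rstar \<mu>}" if "j \<ge> 1" for j
    using wit[OF that] unfolding witnesses_def mg_def by blast
  have chain: "\<forall>a\<in>supp (D (j + k)). \<exists>b\<in>supp (D j). \<exists>M. set_mset M \<subseteq> \<mu> \<and> k \<le> size M \<and> a = b + sum_mset M"
    if j1: "j \<ge> 1" for j k
  proof (induction k)
    case 0
    show ?case
    proof
      fix a assume "a \<in> supp (D (j + 0))"
      then have "a \<in> supp (D j)" "set_mset {#} \<subseteq> \<mu> \<and> 0 \<le> size {#} \<and> a = a + sum_mset {#}" by simp_all
      then show "\<exists>b\<in>supp (D j). \<exists>M. set_mset M \<subseteq> \<mu> \<and> 0 \<le> size M \<and> a = b + sum_mset M" by blast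
    qed
  next
    case (Suc k)
    show ?case
    proof
      fix a assume a: "a \<in> supp (D (j + Suc k))"
      have "j + Suc k \<ge> 2" using j1 by simp
      from prec[OF this] a obtain b' where b': "b' \<in> supp (D (j + k))" "mono_prec \<mu> a b'"
        unfolding ts_prec_def by auto
      then obtain M' where M': "set_mset M' \<subseteq> \<mu>" "M' \<noteq> {#}" "a - b' = sum_mset M'"
        unfolding mono_prec_def rplus_iff by blast
      from Suc b'(1) obtain b M where bM: "b \<in> supp (D j)" "set_mset M \<subseteq> \<mu>" "k \<le> size M" "b' = b + sum_mset M"
        by blast
      have "set_mset (M + M') \<subseteq> \<mu>" using M'(1) bM(2) by auto
      moreover have "Suc k \<le> size (M + M')" using bM(3) M'(2) by (simp add: Suc_leI nonempty_has_size)
      moreover have "a = b + sum_mset (M + M')" using bM(4) M'(3) by (simp add: algebra_simps)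
      ultimately show "\<exists>b\<in>supp (D j). \<exists>M. set_mset M \<subseteq> \<mu> \<and> Suc k \<le> size M \<and> a = b + sum_mset M"
        using bM(1) by blast
    qed
  qed
  have chain2: "\<exists>M. set_mset M \<subseteq> \<mu> \<and> k \<le> size M \<and> a = mg j + sum_mset M"
    if j1: "j \<ge> 1" and a: "a \<in> supp (D (j + k))" for j k a
  proof -
    obtain b M where bM: "b \<in> supp (D j)" "set_mset M \<subseteq> \<mu>" "k \<le> size M" "a = b + sum_mset M"
      using chain[OF j1, of k] a by blast
    obtain w where w: "b = mg j + w" "w \<in> rstar \<mu>" using mgsub[OF j1] bM(1) by blast
    then obtain M0 where M0: "set_mset M0 \<subseteq> \<mu>" "w = sum_mset M0" unfolding rstar_iff by blast
    have "set_mset (M0 + M) \<subseteq> \<mu>" using M0(1) bM(2) by auto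
    moreover have "k \<le> size (M0 + M)" using bM(3) by simp
    moreover have "a = mg j + sum_mset (M0 + M)" using bM(4) w(1) M0(2) by (simp add: algebra_simps)
    ultimately show ?thesis by blast
  qed
  have below: "a - mg j \<in> rstar \<mu> \<and> a \<le> mg j" if j1: "j \<ge> 1" and ij: "i \<ge> j" and a: "a \<in> supp (D i)" for i j a
  proof -
    have "i = j + (i - j)" using ij by simp
    then have "a \<in> supp (D (j + (i - j)))" using a by simp
    then obtain M where M: "set_mset M \<subseteq> \<mu>" "a = mg j + sum_mset M" using chain2[OF j1] by blast
    then have "a - mg j \<in> rstar \<mu>" unfolding rstar_iff by (intro exI[of _ M]) (simp add: algebra_simps)
    moreover have "sum_mset M \<le> 0" using sum_mset_nonpos[OF neg M(1)] .
    ultimately show ?thesis using M(2) by simp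
  qed
  have strictly: "a - mg j \<in> rplus \<mu> \<and> a < mg j" if j1: "j \<ge> 1" and ij: "i > j" and a: "a \<in> supp (D i)" for i j a
  proof -
    have "i = j + (i - j)" using ij by simp
    then have "a \<in> supp (D (j + (i - j)))" using a by simp
    then obtain M where M: "set_mset M \<subseteq> \<mu>" "i - j \<le> size M" "a = mg j + sum_mset M" using chain2[OF j1] by blast
    then have Mne: "M \<noteq> {#}" using ij by auto
    then have "a - mg j \<in> rplus \<mu>" unfolding rplus_iff using M by (intro exI[of _ M]) (simp add: algebra_simps)
    moreover have "sum_mset M < 0" using sum_mset_neg[OF neg M(1) Mne] .
    ultimately show ?thesis using M(3) by simp
  qed
  have ev: "\<exists>K\<ge>1. \<forall>i\<ge>K. D i x = 0" for x
  proof -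
    obtain N where N: "\<forall>M. set_mset M \<subseteq> \<mu> \<and> sum_mset M = x - mg 1 \<longrightarrow> size M \<le> N"
      using bounded_size[OF rs] by blast
    have "D i x = 0" if i: "i \<ge> N + 2" for i
    proof (rule ccontr)
      assume "D i x \<noteq> 0"
      then have "x \<in> supp (D (1 + (i - 1)))" using i unfolding supp_def by simp
      then obtain M where M: "set_mset M \<subseteq> \<mu>" "i - 1 \<le> size M" "x = mg 1 + sum_mset M"
        using chain2[of 1] by blast
      then have "size M \<le> N" using N by (simp add: algebra_simps)
      then show False using M(2) i by simp
    qed
    then show ?thesis by (intro exI[of _ "N + 2"]) simp
  qed
  then obtain K where K: "\<And>x. K x \<ge> 1" "\<And>x i. i \<ge> K x \<Longrightarrow> D i x = 0" by metis
  have stab: "S i x = S (K x) x" if "i \<ge> K x" for i x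
    using that
  proof (induction i rule: dec_induct)
    case base then show ?case by simp
  next
    case (step i)
    have "D i x = 0" using K(2) step(1) .
    then show ?case using step(3) unfolding D_def by simp
  qed
  define L where "L x = S (K x) x" for x
  define N where "N j x = max (Suc j) (K x)" for j x
  have Tsum: "(L - S j) x = (\<Sum>i = j..<N j x. D i x)" for j x
  proof -
    have "L x = S (N j x) x" unfolding L_def N_def by (rule stab[symmetric]) simp
    moreover have "(\<Sum>i = j..<N j x. D i x) = S (N j x) x - S j x"
      unfolding D_def minus_apply using sum_Suc_diff'[of j "N j x" "\<lambda>i. S i x"] N_def by simp
    ultimately show ?thesis by simp
  qed
  have Tsupp: "\<exists>i\<ge>j. x \<in> supp (D i)" if "x \<in> supp (L - S j)" for j x
  proof (rule ccontr)
    assume "\<not> ?thesis"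
    then have "\<forall>i\<in>{j..<N j x}. D i x = 0" unfolding supp_def by auto
    then have "(L - S j) x = 0" unfolding Tsum by simp
    then show False using that unfolding supp_def by simp
  qed
  have Tmg: "(L - S j) (mg j) = D j (mg j)" if j1: "j \<ge> 1" for j
  proof -
    have lt: "j < N j (mg j)" unfolding N_def by simp
    have "\<forall>i\<in>{Suc j..<N j (mg j)}. D i (mg j) = 0"
    proof
      fix i assume "i \<in> {Suc j..<N j (mg j)}"
      then have "i > j" by simp
      show "D i (mg j) = 0"
      proof (rule ccontr)
        assume "D i (mg j) \<noteq> 0"
        then have "mg j \<in> supp (D i)" unfolding supp_def by simp
        then show False using strictly[OF j1 \<open>i > j\<close>] by blast
      qed
    qed
    then have "(\<Sum>i = Suc j..<N j (mg j). D i (mg j)) = 0" by simp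
    then show ?thesis unfolding Tsum using sum.atLeast_Suc_lessThan[OF lt, of "\<lambda>i. D i (mg j)"] by simp
  qed
  have conv: "geom_converges \<mu> S L"
    unfolding geom_converges_def
  proof (intro allI impI conjI)
    fix j :: nat assume j1: "j \<ge> 1"
    have inT: "mg j \<in> supp (L - S j)" using Tmg[OF j1] mgp[OF j1] unfolding supp_def by simp
    have leT: "\<forall>n\<in>supp (L - S j). n \<le> mg j"
      using Tsupp below[OF j1] by blast
    have magT: "mag (L - S j) = mg j" using mag_eq[OF inT leT] .
    show "witnesses \<mu> (L - S j)"
      unfolding witnesses_def
    proof
      show "L - S j \<noteq> 0" using inT unfolding supp_def by auto
      show "supp (L - S j) \<subseteq> {mag (L - S j) + w |w. w \<in> rstar \<mu>}"
      proof
        fix x assume "x \<in> supp (L - S j)"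
        then obtain i where "i \<ge> j" "x \<in> supp (D i)" using Tsupp by blast
        then have "x - mg j \<in> rstar \<mu>" using below[OF j1] by blast
        then show "x \<in> {mag (L - S j) + w |w. w \<in> rstar \<mu>}" unfolding magT
          by (intro CollectI exI[of _ "x - mg j"]) simp
      qed
    qed
    show "ts_prec \<mu> (L - S (Suc j)) (L - S j)"
      unfolding ts_prec_def
    proof
      fix a assume "a \<in> supp (L - S (Suc j))"
      then obtain i where i: "i \<ge> Suc j" "a \<in> supp (D i)" using Tsupp by blast
      then have "i > j" by simp
      then have "a - mg j \<in> rplus \<mu>" using strictly[OF j1 _ i(2)] by blast
      then show "\<exists>b\<in>supp (L - S j). mono_prec \<mu> a b" using inT unfolding mono_prec_def by blast
    qed
  qed
  obtain m' \<mu>' where g1: "ratio_set \<mu>'" "supp (S 1) \<subseteq> {m' + w | w. w \<in> rstar \<mu>'}"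
    using assms(2) unfolding grid_based_def by auto
  have g2: "supp (L - S 1) \<subseteq> {mg 1 + w | w. w \<in> rstar \<mu>}"
  proof
    fix x assume "x \<in> supp (L - S 1)"
    then obtain i where "i \<ge> 1" "x \<in> supp (D i)" using Tsupp by blast
    then have "x - mg 1 \<in> rstar \<mu>" using below[of 1] by blast
    then show "x \<in> {mg 1 + w |w. w \<in> rstar \<mu>}" by (intro CollectI exI[of _ "x - mg 1"]) simp
  qed
  have Lsub: "supp L \<subseteq> supp (S 1) \<union> supp (L - S 1)" unfolding supp_def by auto
  have "\<exists>m \<nu>. ratio_set \<nu> \<and> supp (S 1) \<union> supp (L - S 1) \<subseteq> {m + w | w. w \<in> rstar \<nu>}"
  proof (cases "m' \<le> mg 1")
    case True
    show ?thesis using grid_union[OF rs g1(1) g2 g1(2) True] by blast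
  next
    case False
    then have "mg 1 \<le> m'" by simp
    from grid_union[OF g1(1) rs g1(2) g2 this] show ?thesis by (simp add: Un_commute)
  qed
  then have "grid_based L" unfolding grid_based_def using Lsub by blast
  with conv show ?thesis by blast
qed

end
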